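(* Let $q$ be a prime power and let $\mathrm{Aff}_q=\mathbb F_q\rtimes\mathbb F_q^*$ act on $\mathbb F_q$ by $(b,a)\circ x=ax+b$. For $c\in\mathbb F_q$ let $H_c=\{((1-a)c,a): a\in\mathbb F_q^*\}$ (the stabilizer of $c$), and let $\mathcal H=\{H_c: c\in\mathbb F_q\}$. Then the (quantum) query complexity of $\mathrm{HSSP}(\mathrm{Aff}_q,\mathbb F_q,\circ,\mathcal H)$ is $\Omega(q^{1/2})$.
   Context: Group actions: a left action $\circ$ of a finite group $G$ on a finite set $M$ is assumed faithful. For $H\le G$, $H\circ m=\{h\circ m:h\in H\}$ is the $H$-orbit of $m$; $H^*$ denotes the partition of $M$ into $H$-orbits. For a partition $\pi=\{\pi_1,\dots,\pi_\ell\}$ of $M$, $\pi^*=\{g\in G:\ g\circ\pi_i=\pi_i\ \forall i\}$. A subgroup $H$ is closed if $H=H^{**}$. The hidden symmetry subgroup problem $\mathrm{HSSP}(G,M,\circ,\mathcal H)$, for a family $\mathcal H$ of closed subgroups of $G$: given oracle access to a function $f:M\to S$ ($S$ a finite set) such that for some $H\in\mathcal H$ we have $f(x)=f(y)\iff H\circ x=H\circ y$ (we say $f$ hides $H$ by symmetries), output $H$. Query complexity counts the number of oracle queries. *)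

theory Defs
  imports Complex_Main "HOL-Algebra.Ring"
begin

definition orbit_of :: "('g \<Rightarrow> 'm \<Rightarrow> 'm) \<Rightarrow> 'g set \<Rightarrow> 'm \<Rightarrow> 'm set" where
  "orbit_of act H m = (\<lambda>h. act h m) ` H"

definition hides_by_symmetries ::
  "('g \<Rightarrow> 'm \<Rightarrow> 'm) \<Rightarrow> 'm set \<Rightarrow> 'g set \<Rightarrow> ('m \<Rightarrow> 's) \<Rightarrow> bool" where
  "hides_by_symmetries act M H f \<longleftrightarrow>
     (\<forall>x\<in>M. \<forall>y\<in>M. f x = f y \<longleftrightarrow> orbit_of act H x = orbit_of act H y)"

definition aff_carrier :: "('a, 'b) ring_scheme \<Rightarrow> ('a \<times> 'a) set" where
  "aff_carrier R = carrier R \<times> (carrier R - {\<zero>\<^bsub>R\<^esub>})"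

definition aff_act :: "('a, 'b) ring_scheme \<Rightarrow> 'a \<times> 'a \<Rightarrow> 'a \<Rightarrow> 'a" where
  "aff_act R g x = (snd g \<otimes>\<^bsub>R\<^esub> x) \<oplus>\<^bsub>R\<^esub> fst g"

definition stab_subgroup :: "('a, 'b) ring_scheme \<Rightarrow> 'a \<Rightarrow> ('a \<times> 'a) set" where
  "stab_subgroup R c =
     {((\<one>\<^bsub>R\<^esub> \<ominus>\<^bsub>R\<^esub> a) \<otimes>\<^bsub>R\<^esub> c, a) | a. a \<in> carrier R - {\<zero>\<^bsub>R\<^esub>}}"

definition stab_family :: "('a, 'b) ring_scheme \<Rightarrow> ('a \<times> 'a) set set" where
  "stab_family R = stab_subgroup R ` carrier R"

definition apply_op :: "'b set \<Rightarrow> ('b \<Rightarrow> 'b \<Rightarrow> complex) \<Rightarrow> ('b \<Rightarrow> complex) \<Rightarrow> ('b \<Rightarrow> complex)" where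
  "apply_op B U \<psi> = (\<lambda>i. \<Sum>j\<in>B. U i j * \<psi> j)"

definition unitary_on :: "'b set \<Rightarrow> ('b \<Rightarrow> 'b \<Rightarrow> complex) \<Rightarrow> bool" where
  "unitary_on B U \<longleftrightarrow>
     (\<forall>i\<in>B. \<forall>j\<in>B. (\<Sum>k\<in>B. U i k * cnj (U j k)) = (if i = j then 1 else 0))"

text \<open>Basis |x, y, w>: query register x in M, answer register y in Z_m, workspace w < d.\<close>
definition query_basis :: "'m set \<Rightarrow> nat \<Rightarrow> nat \<Rightarrow> ('m \<times> nat \<times> nat) set" where
  "query_basis M m d = M \<times> {..<m} \<times> {..<d}"

text \<open>Standard oracle O_f |x, y, w> = |x, (y + f x) mod m, w>, as a matrix.\<close>
definition oracle_mat :: "nat \<Rightarrow> ('m \<Rightarrow> nat) \<Rightarrow> ('m \<times> nat \<times> nat) \<Rightarrow> ('m \<times> nat \<times> nat) \<Rightarrow> complex" where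
  "oracle_mat m f i j =
     (if fst i = fst j \<and> snd (snd i) = snd (snd j) \<and> fst (snd i) = (fst (snd j) + f (fst j)) mod m
      then 1 else 0)"

text \<open>State after k queries: U_k O U_{k-1} ... O U_0 psi0.\<close>
fun run_alg :: "'b set \<Rightarrow> (nat \<Rightarrow> 'b \<Rightarrow> 'b \<Rightarrow> complex) \<Rightarrow> ('b \<Rightarrow> 'b \<Rightarrow> complex)
                 \<Rightarrow> ('b \<Rightarrow> complex) \<Rightarrow> nat \<Rightarrow> ('b \<Rightarrow> complex)" where
  "run_alg B U Orc \<psi>0 0 = apply_op B (U 0) \<psi>0"
| "run_alg B U Orc \<psi>0 (Suc k) = apply_op B (U (Suc k)) (apply_op B Orc (run_alg B U Orc \<psi>0 k))"

definition success_prob :: "'b set \<Rightarrow> ('b \<Rightarrow> 'h) \<Rightarrow> 'h \<Rightarrow> ('b \<Rightarrow> complex) \<Rightarrow> real" where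
  "success_prob B out H \<psi> = (\<Sum>b\<in>{b\<in>B. out b = H}. (cmod (\<psi> b))\<^sup>2)"

definition solves_hssp_quantum ::
  "('g \<Rightarrow> 'm \<Rightarrow> 'm) \<Rightarrow> 'm set \<Rightarrow> 'g set set \<Rightarrow> nat \<Rightarrow> nat \<Rightarrow> bool" where
  "solves_hssp_quantum act M Hs m T \<longleftrightarrow>
     (\<exists>(d::nat) (U :: nat \<Rightarrow> ('m \<times> nat \<times> nat) \<Rightarrow> ('m \<times> nat \<times> nat) \<Rightarrow> complex)
        (\<psi>0 :: ('m \<times> nat \<times> nat) \<Rightarrow> complex) (out :: ('m \<times> nat \<times> nat) \<Rightarrow> 'g set).
        (\<forall>k\<le>T. unitary_on (query_basis M m d) (U k)) \<and>
        (\<Sum>b\<in>query_basis M m d. (cmod (\<psi>0 b))\<^sup>2) = 1 \<and>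
        (\<forall>H\<in>Hs. \<forall>f :: 'm \<Rightarrow> nat. (\<forall>x\<in>M. f x < m) \<longrightarrow> hides_by_symmetries act M H f \<longrightarrow>
            success_prob (query_basis M m d) out H
              (run_alg (query_basis M m d) U (oracle_mat m f) \<psi>0 T) \<ge> 2/3))"

end

theory Submission
  imports Defs "HOL-Analysis.L2_Norm" "HOL-Analysis.Convex"
begin


lemma apply_op_diff:
  "apply_op B U \<phi> i - apply_op B U \<chi> i = apply_op B U (\<lambda>b. \<phi> b - \<chi> b) i"
  by (simp add: apply_op_def algebra_simps sum_subtractf)

lemma apply_op_cong: "(\<And>b. b \<in> B \<Longrightarrow> \<phi> b = \<chi> b) \<Longrightarrow> apply_op B U \<phi> = apply_op B U \<chi>"
  unfolding apply_op_def by (intro ext sum.cong) auto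

lemma bessel:
  assumes fin: "finite B" and U: "unitary_on B U"
  shows "(\<Sum>i\<in>B. (cmod (apply_op B U \<psi> i))\<^sup>2) \<le> (\<Sum>j\<in>B. (cmod (\<psi> j))\<^sup>2)"
proof -
  define c where "c i = apply_op B U \<psi> i" for i
  define e where "e j = (\<Sum>i\<in>B. c i * cnj (U i j))" for j
  have ce: "cnj (e j) = (\<Sum>i\<in>B. cnj (c i) * U i j)" for j
    by (simp add: e_def)
  have S1: "(\<Sum>j\<in>B. \<psi> j * cnj (e j)) = (\<Sum>i\<in>B. c i * cnj (c i))"
  proof -
    have "(\<Sum>j\<in>B. \<psi> j * cnj (e j)) = (\<Sum>j\<in>B. \<Sum>i\<in>B. cnj (c i) * (U i j * \<psi> j))"
      by (simp add: ce sum_distrib_left algebra_simps)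
    also have "\<dots> = (\<Sum>i\<in>B. \<Sum>j\<in>B. cnj (c i) * (U i j * \<psi> j))"
      by (rule sum.swap)
    also have "\<dots> = (\<Sum>i\<in>B. cnj (c i) * c i)"
      by (simp add: c_def apply_op_def sum_distrib_left)
    finally show ?thesis by (simp add: mult.commute)
  qed
  have S1': "(\<Sum>j\<in>B. e j * cnj (\<psi> j)) = (\<Sum>i\<in>B. c i * cnj (c i))"
  proof -
    have "(\<Sum>j\<in>B. e j * cnj (\<psi> j)) = cnj (\<Sum>j\<in>B. \<psi> j * cnj (e j))"
      by (simp add: mult.commute)
    also have "\<dots> = (\<Sum>i\<in>B. c i * cnj (c i))" unfolding S1 by (simp add: mult.commute)
    finally show ?thesis .
  qed
  have S2: "(\<Sum>j\<in>B. e j * cnj (e j)) = (\<Sum>i\<in>B. c i * cnj (c i))"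
  proof -
    have "(\<Sum>j\<in>B. e j * cnj (e j)) = (\<Sum>j\<in>B. \<Sum>i\<in>B. \<Sum>i'\<in>B. c i * cnj (c i') * (U i' j * cnj (U i j)))"
      apply (simp add: e_def ce sum_distrib_left sum_distrib_right algebra_simps)
      apply (rule sum.cong[OF refl])
      apply (subst sum.swap) by (simp add: algebra_simps)
    also have "\<dots> = (\<Sum>i\<in>B. \<Sum>j\<in>B. \<Sum>i'\<in>B. c i * cnj (c i') * (U i' j * cnj (U i j)))"
      by (rule sum.swap)
    also have "\<dots> = (\<Sum>i\<in>B. \<Sum>i'\<in>B. \<Sum>j\<in>B. c i * cnj (c i') * (U i' j * cnj (U i j)))"
      by (intro sum.cong refl sum.swap)
    also have "\<dots> = (\<Sum>i\<in>B. \<Sum>i'\<in>B. c i * cnj (c i') * (if i' = i then 1 else 0))"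
      using U unfolding unitary_on_def by (intro sum.cong refl) (simp add: sum_distrib_left[symmetric])
    also have "\<dots> = (\<Sum>i\<in>B. c i * cnj (c i))"
      using fin by (simp add: if_distrib cong: if_cong)
    finally show ?thesis .
  qed
  have "complex_of_real (\<Sum>j\<in>B. (cmod (\<psi> j - e j))\<^sup>2)
     = (\<Sum>j\<in>B. \<psi> j * cnj (\<psi> j)) - (\<Sum>j\<in>B. \<psi> j * cnj (e j)) - (\<Sum>j\<in>B. e j * cnj (\<psi> j)) + (\<Sum>j\<in>B. e j * cnj (e j))"
  proof -
    have "complex_of_real (\<Sum>j\<in>B. (cmod (\<psi> j - e j))\<^sup>2) = (\<Sum>j\<in>B. (\<psi> j - e j) * cnj (\<psi> j - e j))"
      unfolding of_real_sum complex_norm_square ..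
    also have "\<dots> = (\<Sum>j\<in>B. \<psi> j * cnj (\<psi> j) - \<psi> j * cnj (e j) - e j * cnj (\<psi> j) + e j * cnj (e j))"
      by (intro sum.cong refl) (simp add: algebra_simps)
    finally show ?thesis by (simp add: sum.distrib sum_subtractf)
  qed
  also have "\<dots> = complex_of_real ((\<Sum>j\<in>B. (cmod (\<psi> j))\<^sup>2) - (\<Sum>i\<in>B. (cmod (c i))\<^sup>2))"
    by (simp only: S1 S1' S2 of_real_diff of_real_sum complex_norm_square) simp
  finally have "(\<Sum>j\<in>B. (cmod (\<psi> j - e j))\<^sup>2) = (\<Sum>j\<in>B. (cmod (\<psi> j))\<^sup>2) - (\<Sum>i\<in>B. (cmod (c i))\<^sup>2)"
    using of_real_eq_iff by blast
  moreover have "0 \<le> (\<Sum>j\<in>B. (cmod (\<psi> j - e j))\<^sup>2)" by (simp add: sum_nonneg)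
  ultimately show ?thesis by (simp add: c_def)
qed




lemma (in ring) my_minus_eq0:
  assumes "a \<in> carrier R" "b \<in> carrier R"
  shows "a \<ominus> b = \<zero> \<longleftrightarrow> a = b"
  using assms by (metis a_minus_def add.inv_closed minus_equality r_neg)

lemma (in field) orbit_stab:
  assumes c: "c \<in> carrier R" and x: "x \<in> carrier R"
  shows "orbit_of (aff_act R) (stab_subgroup R c) x = (if x = c then {c} else carrier R - {c})"
proof -
  have el: "aff_act R (((\<one> \<ominus> a) \<otimes> c), a) x = c \<oplus> a \<otimes> (x \<ominus> c)" if "a \<in> carrier R" for a
    unfolding aff_act_def using that c x by simp algebra
  have orb: "orbit_of (aff_act R) (stab_subgroup R c) x = (\<lambda>a. c \<oplus> a \<otimes> (x \<ominus> c)) ` (carrier R - {\<zero>})"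
    unfolding orbit_of_def stab_subgroup_def using el by (auto simp: image_iff)
  show ?thesis
  proof (cases "x = c")
    case True
    have "(\<lambda>a. c \<oplus> a \<otimes> (x \<ominus> c)) ` (carrier R - {\<zero>}) = {c}"
    proof -
      have "c \<oplus> a \<otimes> (x \<ominus> c) = c" if "a \<in> carrier R" for a using True that c by simp algebra
      moreover have "\<one> \<in> carrier R - {\<zero>}" by simp
      ultimately show ?thesis by force
    qed
    then show ?thesis using orb True by simp
  next
    case False
    have xc: "x \<ominus> c \<in> carrier R" "x \<ominus> c \<noteq> \<zero>" using x c False
      by (auto simp: my_minus_eq0)
    have "(\<lambda>a. c \<oplus> a \<otimes> (x \<ominus> c)) ` (carrier R - {\<zero>}) = carrier R - {c}"
    proof
      show "(\<lambda>a. c \<oplus> a \<otimes> (x \<ominus> c)) ` (carrier R - {\<zero>}) \<subseteq> carrier R - {c}"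
      proof
        fix y assume "y \<in> (\<lambda>a. c \<oplus> a \<otimes> (x \<ominus> c)) ` (carrier R - {\<zero>})"
        then obtain a where a: "a \<in> carrier R" "a \<noteq> \<zero>" and y: "y = c \<oplus> a \<otimes> (x \<ominus> c)" by auto
        have "a \<otimes> (x \<ominus> c) \<noteq> \<zero>" using a xc integral by blast
        moreover have "y = c \<Longrightarrow> a \<otimes> (x \<ominus> c) = \<zero>"
        proof -
          assume "y = c"
          have "a \<otimes> (x \<ominus> c) = y \<ominus> c" using y a xc c by simp algebra
          then show ?thesis using \<open>y = c\<close> c by (simp add: my_minus_eq0)
        qed
        moreover have "y \<in> carrier R" unfolding y using a xc c by simp
        ultimately show "y \<in> carrier R - {c}" by blast
      qed
    next
      show "carrier R - {c} \<subseteq> (\<lambda>a. c \<oplus> a \<otimes> (x \<ominus> c)) ` (carrier R - {\<zero>})"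
      proof
        fix y assume y: "y \<in> carrier R - {c}"
        have yc: "y \<ominus> c \<in> carrier R" "y \<ominus> c \<noteq> \<zero>" using y c
          by (auto simp: my_minus_eq0)
        have U: "x \<ominus> c \<in> Units R" using xc field_Units by auto
        define a where "a = (y \<ominus> c) \<otimes> inv (x \<ominus> c)"
        have ai: "inv (x \<ominus> c) \<in> carrier R" using U by simp
        have a1: "a \<in> carrier R" using ai yc by (simp add: a_def)
        have "inv (x \<ominus> c) \<otimes> (x \<ominus> c) = \<one>" using U by simp
        hence "a \<otimes> (x \<ominus> c) = y \<ominus> c" unfolding a_def using ai yc xc by (simp add: m_assoc)
        hence ya: "c \<oplus> a \<otimes> (x \<ominus> c) = y" using y c by simp algebra
        have "a \<noteq> \<zero>" using \<open>a \<otimes> (x \<ominus> c) = y \<ominus> c\<close> yc xc by auto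
        then show "y \<in> (\<lambda>a. c \<oplus> a \<otimes> (x \<ominus> c)) ` (carrier R - {\<zero>})" using ya a1 by force
      qed
    qed
    then show ?thesis using orb False by simp
  qed
qed

lemma (in field) hides_ind:
  assumes c: "c \<in> carrier R"
  shows "hides_by_symmetries (aff_act R) (carrier R) (stab_subgroup R c) (\<lambda>x. if x = c then (1::nat) else 0)"
  unfolding hides_by_symmetries_def using c by (auto simp: orbit_stab)

lemma (in field) stab_inj:
  assumes "\<exists>a\<in>carrier R. a \<noteq> \<zero> \<and> a \<noteq> \<one>"
  shows "inj_on (stab_subgroup R) (carrier R)"
proof (rule inj_onI)
  fix c c' assume c: "c \<in> carrier R" and c': "c' \<in> carrier R" and eq: "stab_subgroup R c = stab_subgroup R c'"
  obtain a where a: "a \<in> carrier R" "a \<noteq> \<zero>" "a \<noteq> \<one>" using assms by blast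
  have "((\<one> \<ominus> a) \<otimes> c, a) \<in> stab_subgroup R c" unfolding stab_subgroup_def using a by auto
  then have "((\<one> \<ominus> a) \<otimes> c, a) \<in> stab_subgroup R c'" using eq by simp
  then have e: "(\<one> \<ominus> a) \<otimes> c = (\<one> \<ominus> a) \<otimes> c'" unfolding stab_subgroup_def by auto
  have "\<one> \<ominus> a \<noteq> \<zero>" using a by (simp add: my_minus_eq0)
  moreover have "\<one> \<ominus> a \<in> carrier R" using a by simp
  ultimately show "c = c'" using e m_lcancel c c' by blast
qed




lemma modinj: "(y1 + a) mod (m::nat) = (y2 + a) mod m \<Longrightarrow> y1 < m \<Longrightarrow> y2 < m \<Longrightarrow> y1 = y2"
proof -
  assume h: "(y1 + a) mod (m::nat) = (y2 + a) mod m" "y1 < m" "y2 < m"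
  have "(y1 + a + (m - a mod m)) mod m = (y2 + a + (m - a mod m)) mod m"
    using h(1) by (metis mod_add_left_eq)
  moreover have "(y + a + (m - a mod m)) mod m = y" if "y < m" for y
  proof -
    have "m > 0" using that by simp
    have "a = a div m * m + a mod m" by simp
    then have "y + a + (m - a mod m) = y + (a div m + 1) * m"
      using \<open>m > 0\<close> by (smt (verit) add.commute add_mult_distrib2 group_cancel.add1 le_add_diff_inverse mod_less_divisor mult.commute nat_mult_1_right order_less_imp_le)
    then show ?thesis unfolding mod_mult_self1 using that by (simp only: mod_mult_self1 mod_less)
  qed
  ultimately show ?thesis using h by simp
qed

lemma modinv: "a < (m::nat) \<Longrightarrow> y < m \<Longrightarrow> (((y + (m - a)) mod m) + a) mod m = y"
  by (simp add: add.commute add.left_commute mod_add_right_eq mod_less)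

definition gmap :: "nat \<Rightarrow> ('m \<Rightarrow> nat) \<Rightarrow> 'm \<times> nat \<times> nat \<Rightarrow> 'm \<times> nat \<times> nat" where
  "gmap m f i = (fst i, (fst (snd i) + (m - f (fst i))) mod m, snd (snd i))"

lemma gmap_in: "m > 0 \<Longrightarrow> i \<in> query_basis M m d \<Longrightarrow> gmap m f i \<in> query_basis M m d"
  by (auto simp: gmap_def query_basis_def)

lemma oracle_entry:
  assumes "i \<in> query_basis M m d" "j \<in> query_basis M m d" "\<forall>x\<in>M. f x < m"
  shows "oracle_mat m f i j = (if j = gmap m f i then 1 else 0)"
proof -
  obtain x y w where i: "i = (x, y, w)" "x \<in> M" "y < m" "w < d" using assms(1) by (auto simp: query_basis_def)
  obtain x' y' w' where j: "j = (x', y', w')" "x' \<in> M" "y' < m" "w' < d" using assms(2) by (auto simp: query_basis_def)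
  have "(x = x' \<and> w = w' \<and> y = (y' + f x') mod m) \<longleftrightarrow> (x' = x \<and> y' = (y + (m - f x)) mod m \<and> w' = w)"
  proof
    assume h: "x = x' \<and> w = w' \<and> y = (y' + f x') mod m"
    have "((y + (m - f x)) mod m + f x) mod m = (y' + f x) mod m" using modinv[of "f x" m y] assms(3) i h by auto
    then have "(y + (m - f x)) mod m = y'" using modinj[of "(y + (m - f x)) mod m" "f x" m y'] j i by auto
    then show "x' = x \<and> y' = (y + (m - f x)) mod m \<and> w' = w" using h by auto
  next
    assume h: "x' = x \<and> y' = (y + (m - f x)) mod m \<and> w' = w"
    then show "x = x' \<and> w = w' \<and> y = (y' + f x') mod m" using modinv[of "f x" m y] assms(3) i by auto
  qed
  then show ?thesis using i j by (auto simp: oracle_mat_def gmap_def)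
qed

lemma oracle_apply:
  assumes "i \<in> query_basis M m d" "\<forall>x\<in>M. f x < m" "finite M"
  shows "apply_op (query_basis M m d) (oracle_mat m f) \<psi> i = \<psi> (gmap m f i)"
proof -
  have m: "m > 0" using assms(1) by (auto simp: query_basis_def)
  have "apply_op (query_basis M m d) (oracle_mat m f) \<psi> i
      = (\<Sum>j\<in>query_basis M m d. (if j = gmap m f i then \<psi> j else 0))"
    unfolding apply_op_def using oracle_entry[OF assms(1) _ assms(2)] by (intro sum.cong) auto
  also have "\<dots> = \<psi> (gmap m f i)"
    using gmap_in[OF m assms(1), of f] assms(3) by (simp add: sum.delta' query_basis_def)
  finally show ?thesis .
qed

lemma gmap_inj: "\<forall>x\<in>M. f x < m \<Longrightarrow> inj_on (gmap m f) (query_basis M m d)"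
  unfolding inj_on_def gmap_def query_basis_def
  by (auto dest: modinj)

lemma gmap_zero: "i \<in> query_basis M m d \<Longrightarrow> f (fst i) = 0 \<Longrightarrow> gmap m f i = i"
  by (cases i) (auto simp: gmap_def query_basis_def)




definition nrm :: "'b set \<Rightarrow> ('b \<Rightarrow> complex) \<Rightarrow> real" where
  "nrm B \<psi> = L2_set (\<lambda>b. cmod (\<psi> b)) B"

lemma nrm_sq: "(nrm B \<psi>)\<^sup>2 = (\<Sum>b\<in>B. (cmod (\<psi> b))\<^sup>2)"
  unfolding nrm_def L2_set_def by (simp add: sum_nonneg)

lemma nrm_nonneg: "0 \<le> nrm B \<psi>" unfolding nrm_def by simp

lemma nrm_le_sq: "(\<Sum>b\<in>B. (cmod (\<phi> b))\<^sup>2) \<le> (\<Sum>b\<in>B. (cmod (\<chi> b))\<^sup>2) \<Longrightarrow> nrm B \<phi> \<le> nrm B \<chi>"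
  unfolding nrm_def L2_set_def by (rule real_sqrt_le_mono)

lemma U_contract: "finite B \<Longrightarrow> unitary_on B U \<Longrightarrow> nrm B (apply_op B U \<psi>) \<le> nrm B \<psi>"
  by (rule nrm_le_sq) (rule bessel)

lemma nrm_triangle: "nrm B (\<lambda>b. \<phi> b + \<chi> b) \<le> nrm B \<phi> + nrm B \<chi>"
proof -
  have "nrm B (\<lambda>b. \<phi> b + \<chi> b) \<le> L2_set (\<lambda>b. cmod (\<phi> b) + cmod (\<chi> b)) B"
    unfolding nrm_def by (rule L2_set_mono) (auto simp: norm_triangle_ineq)
  also have "\<dots> \<le> nrm B \<phi> + nrm B \<chi>" unfolding nrm_def by (rule L2_set_triangle_ineq)
  finally show ?thesis .
qed

lemma nrm_cong: "(\<And>b. b \<in> B \<Longrightarrow> \<phi> b = \<chi> b) \<Longrightarrow> nrm B \<phi> = nrm B \<chi>"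
  unfolding nrm_def by (rule L2_set_cong) auto

lemma nrm_zero: "(\<And>b. b \<in> B \<Longrightarrow> \<phi> b = 0) \<Longrightarrow> nrm B \<phi> = 0"
  unfolding nrm_def by (rule L2_set_0') auto

lemma sq_diff_le: "(cmod (a - b))\<^sup>2 \<le> 2 * (cmod a)\<^sup>2 + 2 * (cmod b)\<^sup>2"
proof -
  have "cmod (a - b) \<le> cmod a + cmod b" by (rule norm_triangle_ineq4)
  then have "(cmod (a - b))\<^sup>2 \<le> (cmod a + cmod b)\<^sup>2" by (simp add: power_mono)
  also have "\<dots> \<le> 2 * (cmod a)\<^sup>2 + 2 * (cmod b)\<^sup>2"
  proof -
    have "0 \<le> (cmod a - cmod b)\<^sup>2" by simp
    then show ?thesis unfolding power2_diff power2_sum by linarith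
  qed
  finally show ?thesis .
qed

lemma sq_add_le: "(cmod (a + b))\<^sup>2 \<le> 2 * (cmod a)\<^sup>2 + 2 * (cmod b)\<^sup>2"
  using sq_diff_le[of a "-b"] by simp

lemma oracle_contract:
  assumes "finite M" "\<forall>x\<in>M. f x < m"
  shows "nrm (query_basis M m d) (apply_op (query_basis M m d) (oracle_mat m f) \<psi>) \<le> nrm (query_basis M m d) \<psi>"
proof (rule nrm_le_sq)
  let ?B = "query_basis M m d"
  have fin: "finite ?B" using assms(1) by (simp add: query_basis_def)
  have "(\<Sum>b\<in>?B. (cmod (apply_op ?B (oracle_mat m f) \<psi> b))\<^sup>2) = (\<Sum>b\<in>?B. (cmod (\<psi> (gmap m f b)))\<^sup>2)"
    using oracle_apply[OF _ assms(2,1)] by (intro sum.cong) auto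
  also have "\<dots> = (\<Sum>b\<in>gmap m f ` ?B. (cmod (\<psi> b))\<^sup>2)"
    using sum.reindex[OF gmap_inj[OF assms(2)], of "\<lambda>b. (cmod (\<psi> b))\<^sup>2"] by (simp add: comp_def)
  also have "\<dots> \<le> (\<Sum>b\<in>?B. (cmod (\<psi> b))\<^sup>2)"
  proof (rule sum_mono2[OF fin])
    show "gmap m f ` ?B \<subseteq> ?B"
    proof
      fix x assume "x \<in> gmap m f ` ?B"
      then obtain b where "b \<in> ?B" "x = gmap m f b" by auto
      moreover have "m > 0" using \<open>b \<in> ?B\<close> by (auto simp: query_basis_def)
      ultimately show "x \<in> ?B" using gmap_in by blast
    qed
  qed auto
  finally show "(\<Sum>b\<in>?B. (cmod (apply_op ?B (oracle_mat m f) \<psi> b))\<^sup>2) \<le> (\<Sum>b\<in>?B. (cmod (\<psi> b))\<^sup>2)" .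
qed




lemma main_bound:
  fixes R :: "('a, 'z) ring_scheme"
  assumes fld: "field R" and finF: "finite (carrier R)" and q6: "card (carrier R) \<ge> 6" and m2: "m \<ge> 2"
    and sol: "solves_hssp_quantum (aff_act R) (carrier R) (stab_family R) m T"
  shows "sqrt (real (card (carrier R))) / 5 \<le> real T"
proof -
  interpret field R by (rule fld)
  define F where "F = carrier R"
  define q where "q = card F"
  obtain d U \<psi>0 out where
    hU: "\<forall>k\<le>T. unitary_on (query_basis F m d) (U k)" and
    h\<psi>: "(\<Sum>b\<in>query_basis F m d. (cmod (\<psi>0 b))\<^sup>2) = 1" and
    hS: "\<forall>H\<in>stab_family R. \<forall>f :: 'a \<Rightarrow> nat. (\<forall>x\<in>F. f x < m) \<longrightarrow> hides_by_symmetries (aff_act R) F H f \<longrightarrow>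
            success_prob (query_basis F m d) out H
              (run_alg (query_basis F m d) U (oracle_mat m f) \<psi>0 T) \<ge> 2/3"
    using sol unfolding solves_hssp_quantum_def F_def by blast
  define B where "B = query_basis F m d"
  have finB: "finite B" using finF by (simp add: B_def query_basis_def F_def)
  define f0 where "f0 = (\<lambda>x::'a. 0::nat)"
  define fc where "fc c = (\<lambda>x. if x = c then 1::nat else 0)" for c :: 'a
  have f0m: "\<forall>x\<in>F. f0 x < m" using m2 by (simp add: f0_def)
  have fcm: "\<forall>x\<in>F. fc c x < m" for c using m2 by (simp add: fc_def)
  define \<phi> where "\<phi> k = run_alg B U (oracle_mat m f0) \<psi>0 k" for k
  define \<chi> where "\<chi> c k = run_alg B U (oracle_mat m (fc c)) \<psi>0 k" for c k
  have finF': "finite F" using finF by (simp add: F_def)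
  have O0: "apply_op B (oracle_mat m f0) \<psi> i = \<psi> i" if "i \<in> B" for \<psi> i
    using oracle_apply[of i F m d f0 \<psi>] gmap_zero[of i F m d f0] that f0m finF'
    by (simp add: B_def f0_def)
  have \<phi>Suc: "\<phi> (Suc k) = apply_op B (U (Suc k)) (\<phi> k)" for k
    unfolding \<phi>_def by (simp, rule apply_op_cong, rule O0)
  have \<chi>Suc: "\<chi> c (Suc k) = apply_op B (U (Suc k)) (apply_op B (oracle_mat m (fc c)) (\<chi> c k))" for c k
    unfolding \<chi>_def by simp
  have \<phi>0: "\<phi> 0 = apply_op B (U 0) \<psi>0" and \<chi>0: "\<chi> c 0 = apply_op B (U 0) \<psi>0" for c
    unfolding \<phi>_def \<chi>_def by simp_all
  have nrm\<psi>0: "nrm B \<psi>0 = 1" unfolding nrm_def L2_set_def using h\<psi> by (simp add: B_def)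
  have nrm\<phi>: "nrm B (\<phi> k) \<le> 1" if "k \<le> T" for k
    using that
  proof (induction k)
    case 0
    then show ?case using U_contract[OF finB, of "U 0" \<psi>0] hU nrm\<psi>0 by (simp add: \<phi>0 B_def)
  next
    case (Suc k)
    then have "nrm B (\<phi> (Suc k)) \<le> nrm B (\<phi> k)"
      unfolding \<phi>Suc using U_contract[OF finB] hU by (simp add: B_def)
    then show ?case using Suc by simp
  qed
  have sq\<phi>: "(\<Sum>b\<in>B. (cmod (\<phi> k b))\<^sup>2) \<le> 1" if "k \<le> T" for k
  proof -
    have "(nrm B (\<phi> k))\<^sup>2 \<le> 1" using nrm\<phi>[OF that] nrm_nonneg[of B "\<phi> k"]
      by (simp add: power_le_one)
    then show ?thesis by (simp add: nrm_sq)
  qed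
  have Ocon: "nrm B (apply_op B (oracle_mat m (fc c)) \<psi>) \<le> nrm B \<psi>" for c \<psi>
    unfolding B_def by (rule oracle_contract[OF finF' fcm])
  define D where "D c k = nrm B (\<lambda>b. \<chi> c k b - \<phi> k b)" for c k
  define E where "E c k = nrm B (\<lambda>b. apply_op B (oracle_mat m (fc c)) (\<phi> k) b - \<phi> k b)" for c k
  have Dstep: "D c (Suc k) \<le> D c k + E c k" if "Suc k \<le> T" for c k
  proof -
    let ?O = "apply_op B (oracle_mat m (fc c))"
    have "D c (Suc k) = nrm B (apply_op B (U (Suc k)) (\<lambda>b. ?O (\<chi> c k) b - \<phi> k b))"
      unfolding D_def \<chi>Suc \<phi>Suc by (simp add: apply_op_diff)
    also have "\<dots> \<le> nrm B (\<lambda>b. ?O (\<chi> c k) b - \<phi> k b)"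
      using U_contract[OF finB] hU that by (simp add: B_def)
    also have "\<dots> = nrm B (\<lambda>b. (?O (\<chi> c k) b - ?O (\<phi> k) b) + (?O (\<phi> k) b - \<phi> k b))"
      by simp
    also have "\<dots> \<le> nrm B (\<lambda>b. ?O (\<chi> c k) b - ?O (\<phi> k) b) + E c k"
      unfolding E_def by (rule nrm_triangle)
    also have "nrm B (\<lambda>b. ?O (\<chi> c k) b - ?O (\<phi> k) b) = nrm B (?O (\<lambda>b. \<chi> c k b - \<phi> k b))"
      by (simp add: apply_op_diff)
    also have "\<dots> \<le> D c k" unfolding D_def by (rule Ocon)
    finally show ?thesis by simp
  qed
  have D0: "D c 0 = 0" for c unfolding D_def \<chi>0 \<phi>0 by (rule nrm_zero) simp
  have Dsum: "D c k \<le> (\<Sum>j<k. E c j)" if "k \<le> T" for c k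
    using that
  proof (induction k)
    case 0 then show ?case by (simp add: D0)
  next
    case (Suc k)
    then show ?case using Dstep[OF Suc.prems, of c] by simp
  qed
  define p where "p c k = (\<Sum>b\<in>{b\<in>B. fst b = c}. (cmod (\<phi> k b))\<^sup>2)" for c k
  have Esq: "(E c k)\<^sup>2 \<le> 4 * p c k" for c k
  proof -
    define g where "g = gmap m (fc c)"
    define Bc where "Bc = {b\<in>B. fst b = c}"
    have BcB: "Bc \<subseteq> B" by (auto simp: Bc_def)
    have finBc: "finite Bc" using finB BcB finite_subset by blast
    have m0: "m > 0" using m2 by simp
    have "(E c k)\<^sup>2 = (\<Sum>b\<in>B. (cmod (apply_op B (oracle_mat m (fc c)) (\<phi> k) b - \<phi> k b))\<^sup>2)"
      unfolding E_def nrm_sq ..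
    also have "\<dots> = (\<Sum>b\<in>B. (cmod (\<phi> k (g b) - \<phi> k b))\<^sup>2)"
      using oracle_apply[OF _ fcm finF'] by (intro sum.cong) (simp_all add: B_def g_def)
    also have "\<dots> = (\<Sum>b\<in>Bc. (cmod (\<phi> k (g b) - \<phi> k b))\<^sup>2)"
    proof (rule sum.mono_neutral_right[OF finB BcB], rule ballI)
      fix b assume "b \<in> B - Bc"
      then have "g b = b" unfolding g_def using gmap_zero[of b F m d "fc c"]
        by (auto simp: Bc_def fc_def B_def)
      then show "(cmod (\<phi> k (g b) - \<phi> k b))\<^sup>2 = 0" by simp
    qed
    also have "\<dots> \<le> (\<Sum>b\<in>Bc. 2 * (cmod (\<phi> k (g b)))\<^sup>2 + 2 * (cmod (\<phi> k b))\<^sup>2)"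
      by (intro sum_mono sq_diff_le)
    also have "\<dots> = 2 * (\<Sum>b\<in>Bc. (cmod (\<phi> k (g b)))\<^sup>2) + 2 * p c k"
      by (simp add: sum.distrib sum_distrib_left p_def Bc_def)
    also have "(\<Sum>b\<in>Bc. (cmod (\<phi> k (g b)))\<^sup>2) \<le> p c k"
    proof -
      have inj: "inj_on g Bc" using inj_on_subset[OF gmap_inj[OF fcm] BcB[unfolded B_def]]
        by (simp add: g_def B_def)
      have "(\<Sum>b\<in>Bc. (cmod (\<phi> k (g b)))\<^sup>2) = (\<Sum>b\<in>g ` Bc. (cmod (\<phi> k b))\<^sup>2)"
        using sum.reindex[OF inj, of "\<lambda>b. (cmod (\<phi> k b))\<^sup>2"] by (simp add: comp_def)
      also have "\<dots> \<le> (\<Sum>b\<in>Bc. (cmod (\<phi> k b))\<^sup>2)"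
      proof (rule sum_mono2[OF finBc])
        show "g ` Bc \<subseteq> Bc"
        proof
          fix x assume "x \<in> g ` Bc"
          then obtain b where b: "b \<in> Bc" "x = g b" by auto
          have "x \<in> B" using gmap_in[OF m0, of b F d "fc c"] b BcB by (auto simp: B_def g_def)
          moreover have "fst x = fst b" using b by (simp add: g_def gmap_def)
          ultimately show "x \<in> Bc" using b by (simp add: Bc_def)
        qed
      qed auto
      finally show ?thesis by (simp add: p_def Bc_def)
    qed
    finally show ?thesis by simp
  qed
  have psum: "(\<Sum>c\<in>F. p c k) \<le> 1" if "k \<le> T" for k
  proof -
    have "fst ` B \<subseteq> F" by (auto simp: B_def query_basis_def)
    then have "(\<Sum>c\<in>F. p c k) = (\<Sum>b\<in>B. (cmod (\<phi> k b))\<^sup>2)"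
      unfolding p_def using sum.group[OF finB finF', of fst "\<lambda>b. (cmod (\<phi> k b))\<^sup>2"] by simp
    then show ?thesis using sq\<phi>[OF that] by simp
  qed
  have DT: "(D c T)\<^sup>2 \<le> 4 * real T * (\<Sum>k<T. p c k)" for c
  proof -
    have "(D c T)\<^sup>2 \<le> (\<Sum>k<T. E c k)\<^sup>2"
      using Dsum[of T c] by (intro power_mono) (simp_all add: D_def nrm_nonneg)
    also have "\<dots> \<le> (\<Sum>k<T. (E c k)\<^sup>2) * real T"
      using sum_squared_le_sum_of_squares[of "E c" "{..<T}"] by simp
    also have "\<dots> \<le> (\<Sum>k<T. 4 * p c k) * real T"
      by (intro mult_right_mono sum_mono Esq) simp
    finally show ?thesis by (simp add: sum_distrib_left mult_ac)
  qed
  have DTsum: "(\<Sum>c\<in>F. (D c T)\<^sup>2) \<le> 4 * (real T)\<^sup>2"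
  proof -
    have "(\<Sum>c\<in>F. (D c T)\<^sup>2) \<le> (\<Sum>c\<in>F. 4 * real T * (\<Sum>k<T. p c k))"
      by (rule sum_mono) (rule DT)
    also have "\<dots> = 4 * real T * (\<Sum>k<T. \<Sum>c\<in>F. p c k)"
      by (simp add: sum_distrib_left sum.swap[of _ F])
    also have "\<dots> \<le> 4 * real T * (\<Sum>k<T. 1)"
      by (intro mult_left_mono sum_mono psum) auto
    finally show ?thesis by (simp add: power2_eq_square)
  qed
  define Q where "Q c = (\<Sum>b\<in>{b\<in>B. out b = stab_subgroup R c}. (cmod (\<phi> T b))\<^sup>2)" for c
  have succ: "2/3 \<le> 2 * (D c T)\<^sup>2 + 2 * Q c" if c: "c \<in> F" for c
  proof -
    define Sc where "Sc = {b\<in>B. out b = stab_subgroup R c}"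
    have ScB: "Sc \<subseteq> B" by (auto simp: Sc_def)
    have Hin: "stab_subgroup R c \<in> stab_family R" using c by (simp add: stab_family_def F_def)
    have hid: "hides_by_symmetries (aff_act R) F (stab_subgroup R c) (fc c)"
      using hides_ind[of c] c by (simp add: F_def fc_def)
    have "2/3 \<le> success_prob B out (stab_subgroup R c) (\<chi> c T)"
      using hS Hin fcm hid unfolding \<chi>_def B_def by blast
    also have "\<dots> = (\<Sum>b\<in>Sc. (cmod ((\<chi> c T b - \<phi> T b) + \<phi> T b))\<^sup>2)"
      by (simp add: success_prob_def Sc_def)
    also have "\<dots> \<le> (\<Sum>b\<in>Sc. 2 * (cmod (\<chi> c T b - \<phi> T b))\<^sup>2 + 2 * (cmod (\<phi> T b))\<^sup>2)"
      by (intro sum_mono sq_add_le)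
    also have "\<dots> = 2 * (\<Sum>b\<in>Sc. (cmod (\<chi> c T b - \<phi> T b))\<^sup>2) + 2 * Q c"
      by (simp add: sum.distrib sum_distrib_left Q_def Sc_def)
    also have "(\<Sum>b\<in>Sc. (cmod (\<chi> c T b - \<phi> T b))\<^sup>2) \<le> (\<Sum>b\<in>B. (cmod (\<chi> c T b - \<phi> T b))\<^sup>2)"
      by (rule sum_mono2[OF finB ScB]) simp
    also have "\<dots> = (D c T)\<^sup>2" unfolding D_def nrm_sq ..
    finally show ?thesis by simp
  qed
  have Qsum: "(\<Sum>c\<in>F. Q c) \<le> 1"
  proof -
    have "\<exists>a\<in>carrier R. a \<noteq> \<zero>\<^bsub>R\<^esub> \<and> a \<noteq> \<one>\<^bsub>R\<^esub>"
    proof (rule ccontr)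
      assume "\<not> ?thesis"
      then have "F \<subseteq> {\<zero>\<^bsub>R\<^esub>, \<one>\<^bsub>R\<^esub>}" by (auto simp: F_def)
      then have "card F \<le> card {\<zero>\<^bsub>R\<^esub>, \<one>\<^bsub>R\<^esub>}" by (rule card_mono[rotated]) simp
      also have "\<dots> \<le> 2" by (simp add: card_insert_if)
      finally show False using q6 by (simp add: F_def)
    qed
    then have inj: "inj_on (stab_subgroup R) F" using stab_inj by (simp add: F_def)
    define G where "G X = (\<Sum>b\<in>{b\<in>B. out b = X}. (cmod (\<phi> T b))\<^sup>2)" for X
    define S' where "S' = {b\<in>B. out b \<in> stab_subgroup R ` F}"
    have finS': "finite S'" using finB by (simp add: S'_def)
    have "(\<Sum>c\<in>F. Q c) = (\<Sum>X\<in>stab_subgroup R ` F. G X)"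
      using sum.reindex[OF inj, of G] by (simp add: comp_def Q_def G_def)
    also have "\<dots> = (\<Sum>X\<in>stab_subgroup R ` F. \<Sum>b\<in>{x. x \<in> S' \<and> out x = X}. (cmod (\<phi> T b))\<^sup>2)"
      unfolding G_def S'_def by (intro sum.cong refl) auto
    also have "\<dots> = (\<Sum>b\<in>S'. (cmod (\<phi> T b))\<^sup>2)"
      by (rule sum.group[OF finS']) (auto simp: S'_def finF')
    also have "\<dots> \<le> (\<Sum>b\<in>B. (cmod (\<phi> T b))\<^sup>2)"
      by (rule sum_mono2[OF finB]) (auto simp: S'_def)
    also have "\<dots> \<le> 1" by (rule sq\<phi>) simp
    finally show ?thesis .
  qed
  have "real q * (2/3) \<le> (\<Sum>c\<in>F. 2 * (D c T)\<^sup>2 + 2 * Q c)"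
    using sum_mono[of F "\<lambda>_. 2/3" "\<lambda>c. 2 * (D c T)\<^sup>2 + 2 * Q c"] succ by (simp add: q_def)
  also have "\<dots> = 2 * (\<Sum>c\<in>F. (D c T)\<^sup>2) + 2 * (\<Sum>c\<in>F. Q c)"
    by (simp add: sum.distrib sum_distrib_left)
  also have "\<dots> \<le> 8 * (real T)\<^sup>2 + 2" using DTsum Qsum by simp
  finally have main: "real q * (2/3) \<le> 8 * (real T)\<^sup>2 + 2" .
  have "q \<ge> 6" using q6 by (simp add: q_def F_def)
  then have "real q / 25 \<le> (real T)\<^sup>2" using main by simp
  then have "sqrt (real q / 25) \<le> sqrt ((real T)\<^sup>2)" by (rule real_sqrt_le_mono)
  then show ?thesis by (simp add: q_def F_def real_sqrt_divide)
qed



theorem proposition1: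
  "\<exists>C>0. \<exists>N::nat. \<forall>(R :: nat ring) (m::nat) (T::nat).
      field R \<longrightarrow> finite (carrier R) \<longrightarrow> card (carrier R) \<ge> N \<longrightarrow> m \<ge> 2 \<longrightarrow>
      solves_hssp_quantum (aff_act R) (carrier R) (stab_family R) m T \<longrightarrow>
      real T \<ge> C * sqrt (real (card (carrier R)))"
proof (intro exI[of _ "1/5"] conjI exI[of _ "6::nat"] allI impI)
  fix R :: "nat ring" and m T :: nat
  assume "field R" "finite (carrier R)" "card (carrier R) \<ge> 6" "m \<ge> 2"
    "solves_hssp_quantum (aff_act R) (carrier R) (stab_family R) m T"
  then have "sqrt (real (card (carrier R))) / 5 \<le> real T" by (rule main_bound)
  then show "1/5 * sqrt (real (card (carrier R))) \<le> real T" by simp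
qed simp

end
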